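(* For $P$-a.e. $\omega$ the following holds: for every $\epsilon>0$ there exists $N_4(\omega,\epsilon)\in\mathbb N$ such that for every $n>N_4(\omega,\epsilon)$, $C_{Q_n(\omega)}\subset[-\epsilon,\epsilon]$.
   Context: Fix $m>1/2$. Let $c_m:=\left(\int_{\mathbb R}(1+x^2)^{-m}dx\right)^{-1}$ and let $\nu_m(dx):=c_m(1+x^2)^{-m}dx$ (the Pearson Type VII law $\mathrm{PVII}_m(0,1)$). Let $(X_n)_{n\ge1}$ be i.i.d. random variables on $(\Omega,\mathcal F,P)$ with law $\nu_m$. For $t\in\mathbb R$ let $L_n(t):=\frac1n\sum_{i=1}^n\log(1+(X_i-t)^2)$. Let $Q_n(\omega):=\frac1n\sum_{i=1}^n\delta_{X_i(\omega)}$ be the empirical distribution and $C_{Q_n(\omega)}:=\{t\in\mathbb R: L_n(t)(\omega)=\min_{s\in\mathbb R}L_n(s)(\omega)\}$ the set of minimizers of $L_n(\cdot)(\omega)$. *)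

theory Defs
  imports "HOL-Probability.Probability"
begin

definition pvii_const :: "real \<Rightarrow> real" where
  "pvii_const m = 1 / (\<integral>x. (1 + x\<^sup>2) powr (- m) \<partial>lborel)"

definition pvii_density :: "real \<Rightarrow> real \<Rightarrow> real" where
  "pvii_density m x = pvii_const m * (1 + x\<^sup>2) powr (- m)"

definition Ln :: "(nat \<Rightarrow> 'a \<Rightarrow> real) \<Rightarrow> nat \<Rightarrow> real \<Rightarrow> 'a \<Rightarrow> real" where
  "Ln X n t \<omega> = (1 / real n) * (\<Sum>i\<in>{1..n}. ln (1 + (X i \<omega> - t)\<^sup>2))"

definition minimizer_set :: "(nat \<Rightarrow> 'a \<Rightarrow> real) \<Rightarrow> nat \<Rightarrow> 'a \<Rightarrow> real set" where
  "minimizer_set X n \<omega> = {t. \<forall>s. Ln X n t \<omega> \<le> Ln X n s \<omega>}"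

end

theory Submission
  imports Defs
begin



lemma slln_bdd:
  fixes X :: "nat \<Rightarrow> 'a \<Rightarrow> real" and \<phi> :: "real \<Rightarrow> real"
  assumes P: "prob_space M"
    and ind: "prob_space.indep_vars M (\<lambda>_. borel) X {1..}"
    and dist: "\<And>i. i \<ge> 1 \<Longrightarrow> distr M borel (X i) = distr M borel (X 1)"
    and phim[measurable]: "\<phi> \<in> borel_measurable borel"
    and phib: "\<And>x. a \<le> \<phi> x" "\<And>x. \<phi> x \<le> b" and ab: "a < b"
    and e: "\<epsilon> > 0"
  shows "AE \<omega> in M. eventually (\<lambda>n. \<bar>(\<Sum>i\<in>{1..n}. \<phi> (X i \<omega>)) / real n - (\<integral>\<omega>. \<phi> (X 1 \<omega>) \<partial>M)\<bar> < \<epsilon>) sequentially"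
proof -
  interpret prob_space M by (rule P)
  have Xm[measurable]: "X i \<in> borel_measurable M" if "i \<ge> 1" for i
    using ind that unfolding indep_vars_def by auto
  define \<mu> where "\<mu> = (\<integral>\<omega>. \<phi> (X 1 \<omega>) \<partial>M)"
  define A where "A n = {\<omega>\<in>space M. \<bar>(\<Sum>i\<in>{1..Suc n}. \<phi> (X i \<omega>)) / real (card {1..Suc n}) - \<mu>\<bar> \<ge> \<epsilon>}" for n
  define c where "c = 2 * \<epsilon>\<^sup>2 / (b - a)\<^sup>2"
  have cpos: "c > 0" using e ab unfolding c_def by auto
  have Ab: "prob (A n) \<le> 2 * exp (- c) ^ Suc n" for n
  proof -
    interpret H: Hoeffding_ineq_iid M "{1..Suc n}" "\<lambda>i \<omega>. \<phi> (X i \<omega>)" "\<lambda>\<omega>. \<phi> (X 1 \<omega>)" a b \<mu>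
    proof (unfold_locales)
      show "indep_vars (\<lambda>_. borel) (\<lambda>i \<omega>. \<phi> (X i \<omega>)) {1..Suc n}"
        by (rule indep_vars_compose2[where M'="\<lambda>_. borel"]) (auto intro: indep_vars_subset[OF ind])
      fix i assume "i \<in> {1..Suc n}"
      then have "i \<ge> 1" by auto
      have "distr M borel (\<lambda>\<omega>. \<phi> (X i \<omega>)) = distr (distr M borel (X i)) borel \<phi>"
        using \<open>i \<ge> 1\<close> by (simp add: distr_distr comp_def)
      also have "\<dots> = distr (distr M borel (X 1)) borel \<phi>" using dist[OF \<open>i \<ge> 1\<close>] by simp
      also have "\<dots> = distr M borel (\<lambda>\<omega>. \<phi> (X 1 \<omega>))"
        by (simp add: distr_distr comp_def)
      finally show "distr M borel (\<lambda>\<omega>. \<phi> (X i \<omega>)) = distr M borel (\<lambda>\<omega>. \<phi> (X 1 \<omega>))" .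
    qed (auto simp: phib \<mu>_def)
    have "prob (A n) \<le> 2 * exp (-2 * real (card {1..Suc n}) * \<epsilon>\<^sup>2 / (b - a)\<^sup>2)"
      unfolding A_def using H.Hoeffding_ineq_abs_ge'[of \<epsilon>] e ab by auto
    also have "\<dots> = 2 * exp (real (Suc n) * (- c))"
      by (rule arg_cong[where f="\<lambda>x. 2 * exp x"]) (simp add: c_def field_simps, simp add: divide_inverse algebra_simps)
    also have "\<dots> = 2 * exp (- c) ^ Suc n"
      by (simp only: exp_of_nat_mult)
    finally show ?thesis .
  qed
  have Am[measurable]: "A n \<in> sets M" for n unfolding A_def by measurable
  have summ: "summable (\<lambda>n. measure M (A n))"
  proof (rule summable_comparison_test'[where g="\<lambda>n. 2 * exp (- c) ^ Suc n"])
    show "summable (\<lambda>n. 2 * exp (- c) ^ Suc n)"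
      using cpos by (intro summable_mult summable_Suc_iff[THEN iffD2] summable_geometric) auto
    show "norm (measure M (A n)) \<le> 2 * exp (- c) ^ Suc n" for n using Ab[of n] by simp
  qed
  have "AE \<omega> in M. eventually (\<lambda>n. \<omega> \<in> space M - A n) sequentially"
    proof (rule borel_cantelli_AE1)
    show "emeasure M (A n) < \<infinity>" for n
      unfolding infinity_ennreal_def less_top[symmetric] by (rule emeasure_finite)
  qed (auto simp: summ)
  then show ?thesis
  proof (rule AE_mp, intro AE_I2 impI)
    fix \<omega> assume "\<omega> \<in> space M" and ev: "eventually (\<lambda>n. \<omega> \<in> space M - A n) sequentially"
    define Q where "Q n \<longleftrightarrow> \<bar>(\<Sum>i\<in>{1..n}. \<phi> (X i \<omega>)) / real n - \<mu>\<bar> < \<epsilon>" for n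
    have "eventually (\<lambda>n. Q (Suc n)) sequentially"
      using ev by eventually_elim (use \<open>\<omega> \<in> space M\<close> in \<open>auto simp: A_def Q_def\<close>)
    then have "eventually Q sequentially" by (rule eventually_sequentially_Suc[THEN iffD1])
    then show "eventually (\<lambda>n. \<bar>(\<Sum>i\<in>{1..n}. \<phi> (X i \<omega>)) / real n - (\<integral>\<omega>. \<phi> (X 1 \<omega>) \<partial>M)\<bar> < \<epsilon>) sequentially"
      unfolding Q_def \<mu>_def .
  qed
qed



lemma rho_lip: "\<bar>ln (1 + (a::real)\<^sup>2) - ln (1 + b\<^sup>2)\<bar> \<le> \<bar>a - b\<bar>"
proof -
  have main: "\<bar>ln (1 + (b::real)\<^sup>2) - ln (1 + a\<^sup>2)\<bar> \<le> \<bar>b - a\<bar>" if "a < b" for a b :: real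
  proof -
    have d: "DERIV (\<lambda>x. ln (1 + x\<^sup>2)) x :> (2 * x / (1 + x\<^sup>2))" for x :: real
    proof -
      have "1 + x\<^sup>2 > 0" by (simp add: add_pos_nonneg)
      then show ?thesis by (auto intro!: derivative_eq_intros simp: field_simps)
    qed
    from MVT2[OF that d] obtain z where z: "a < z" "z < b"
      "ln (1 + b\<^sup>2) - ln (1 + a\<^sup>2) = (b - a) * (2 * z / (1 + z\<^sup>2))" by blast
    have "\<bar>2 * z / (1 + z\<^sup>2)\<bar> \<le> 1"
    proof -
      have "0 \<le> (\<bar>z\<bar> - 1)\<^sup>2" by simp
      then have "2 * \<bar>z\<bar> \<le> 1 + z\<^sup>2" by (simp add: power2_eq_square algebra_simps)
      moreover have "1 + z\<^sup>2 > 0" by (simp add: add_pos_nonneg)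
      ultimately show ?thesis by (simp add: abs_mult)
    qed
    then have "\<bar>(b - a) * (2 * z / (1 + z\<^sup>2))\<bar> \<le> \<bar>b - a\<bar>"
      using mult_left_le[OF _ abs_ge_zero[of "b - a"]] by (simp only: abs_mult)
    with z show ?thesis by simp
  qed
  show ?thesis
  proof (cases a b rule: linorder_cases)
    case less then show ?thesis using main[of a b] by (simp add: abs_minus_commute)
  next
    case equal then show ?thesis by simp
  next
    case greater then show ?thesis using main[of b a] by simp
  qed
qed

lemma peetre: "1 + (x::real)\<^sup>2 \<le> 2 * (1 + (x - t)\<^sup>2) * (1 + t\<^sup>2)"
proof -
  have "x\<^sup>2 \<le> 2 * (x - t)\<^sup>2 + 2 * t\<^sup>2"
    using sum_squares_ge_zero[of "x - 2*t" 0] by (simp add: power2_eq_square algebra_simps)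
  moreover have "0 \<le> (x - t)\<^sup>2 * t\<^sup>2" by simp
  ultimately show ?thesis by (simp add: algebra_simps power2_eq_square)
qed

lemma ln3: "0 < a \<Longrightarrow> 0 < b \<Longrightarrow> 0 < c \<Longrightarrow> ln (a * b * (c::real)) = ln a + ln b + ln c"
  by (simp add: ln_mult)

lemma D_lower: "ln (1 + (x - t)\<^sup>2) - ln (1 + (x::real)\<^sup>2) \<ge> - ln (2 * (1 + t\<^sup>2))"
proof -
  have p: "0 < 1 + (x - t)\<^sup>2" "0 < 1 + x\<^sup>2" "0 < 1 + t\<^sup>2" by (auto simp: add_pos_nonneg)
  have "ln (1 + x\<^sup>2) \<le> ln (2 * (1 + (x - t)\<^sup>2) * (1 + t\<^sup>2))"
    using peetre[of x t] p by simp
  also have "\<dots> = ln 2 + ln (1 + (x - t)\<^sup>2) + ln (1 + t\<^sup>2)"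
    using p by (intro ln3) auto
  finally show ?thesis using ln_mult_pos[of 2 "1 + t\<^sup>2"] p by linarith
qed

lemma D_lower_K:
  assumes "\<bar>x\<bar> \<le> K" "K \<le> \<bar>t\<bar>"
  shows "ln (1 + (x - t)\<^sup>2) - ln (1 + (x::real)\<^sup>2) \<ge> ln (1 + (\<bar>t\<bar> - K)\<^sup>2) - ln (1 + K\<^sup>2)"
proof -
  have "(\<bar>t\<bar> - K)\<^sup>2 \<le> (x - t)\<^sup>2"
  proof -
    have "\<bar>t\<bar> - K \<le> \<bar>x - t\<bar>" using assms by linarith
    then have "(\<bar>t\<bar> - K)\<^sup>2 \<le> \<bar>x - t\<bar>\<^sup>2" using assms by (intro power_mono) auto
    then show ?thesis by simp
  qed
  moreover have "x\<^sup>2 \<le> K\<^sup>2"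
  proof -
    have "\<bar>x\<bar>\<^sup>2 \<le> K\<^sup>2" using assms by (intro power_mono) auto
    then show ?thesis by simp
  qed
  ultimately have "ln (1 + (\<bar>t\<bar> - K)\<^sup>2) \<le> ln (1 + (x - t)\<^sup>2)" "ln (1 + x\<^sup>2) \<le> ln (1 + K\<^sup>2)"
    by (simp_all add: add_pos_nonneg)
  then show ?thesis by linarith
qed



definition Dfun :: "real \<Rightarrow> real \<Rightarrow> real" where
  "Dfun x t = ln (1 + (x - t)\<^sup>2) - ln (1 + x\<^sup>2)"

lemma Dfun_meas[measurable]: "(\<lambda>x. Dfun x t) \<in> borel_measurable borel"
  unfolding Dfun_def by measurable

lemma Dfun_bound: "\<bar>Dfun x t\<bar> \<le> \<bar>t\<bar>"
  using rho_lip[of "x - t" x] by (simp add: Dfun_def)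

lemma Dfun_diff: "\<bar>Dfun x t - Dfun x s\<bar> \<le> \<bar>t - s\<bar>"
  using rho_lip[of "x - t" "x - s"] by (simp add: Dfun_def abs_minus_commute)

lemma Dfun_int:
  assumes fint: "integrable lborel f" and fnn: "\<And>x. 0 \<le> f x"
  shows "integrable lborel (\<lambda>x. f x * Dfun x t)"
proof (rule Bochner_Integration.integrable_bound[where f="\<lambda>x. \<bar>t\<bar> * f x"])
  show "integrable lborel (\<lambda>x. \<bar>t\<bar> * f x)" using fint by simp
  show "(\<lambda>x. f x * Dfun x t) \<in> borel_measurable lborel"
    using borel_measurable_integrable[OF fint] by measurable
  show "AE x in lborel. norm (f x * Dfun x t) \<le> norm (\<bar>t\<bar> * f x)"
  proof (intro AE_I2)
    fix x
    have "\<bar>f x\<bar> * \<bar>Dfun x t\<bar> \<le> \<bar>f x\<bar> * \<bar>t\<bar>"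
      by (intro mult_left_mono Dfun_bound) auto
    then show "norm (f x * Dfun x t) \<le> norm (\<bar>t\<bar> * f x)"
      using fnn[of x] by (simp add: abs_mult mult.commute)
  qed
qed

lemma G_lip:
  assumes fint: "integrable lborel f" and fnn: "\<And>x. 0 \<le> f x" and f1: "(\<integral>x. f x \<partial>lborel) = 1"
  shows "\<bar>(\<integral>x. f x * Dfun x t \<partial>lborel) - (\<integral>x. f x * Dfun x s \<partial>lborel)\<bar> \<le> \<bar>t - s\<bar>"
proof -
  have "(\<integral>x. f x * Dfun x t \<partial>lborel) - (\<integral>x. f x * Dfun x s \<partial>lborel)
      = (\<integral>x. f x * Dfun x t - f x * Dfun x s \<partial>lborel)"
    using Dfun_int[OF fint fnn] by (simp add: integral_diff)
  also have "\<bar>\<dots>\<bar> \<le> (\<integral>x. \<bar>t - s\<bar> * f x \<partial>lborel)"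
  proof (rule integral_abs_bound_integral)
    show "integrable lborel (\<lambda>x. f x * Dfun x t - f x * Dfun x s)"
      using Dfun_int[OF fint fnn] by auto
    show "integrable lborel (\<lambda>x. \<bar>t - s\<bar> * f x)" using fint by simp
    fix x
    have "\<bar>f x\<bar> * \<bar>Dfun x t - Dfun x s\<bar> \<le> \<bar>f x\<bar> * \<bar>t - s\<bar>"
      by (intro mult_left_mono Dfun_diff) auto
    then show "\<bar>f x * Dfun x t - f x * Dfun x s\<bar> \<le> \<bar>t - s\<bar> * f x"
      using fnn[of x] by (simp add: abs_mult mult.commute right_diff_distrib[symmetric])
  qed
  also have "\<dots> = \<bar>t - s\<bar>" using f1 by simp
  finally show ?thesis .
qed

lemma G_pos:
  assumes f_def: "\<And>x. f x = c * (1 + x\<^sup>2) powr (- m)" and c: "c > 0" and m: "m > 0"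
    and fint: "integrable lborel f" and t: "t \<noteq> 0"
  shows "(\<integral>x. f x * Dfun x t \<partial>lborel) > 0"
proof -
  have fnn: "0 \<le> f x" for x using c by (simp add: f_def)
  have fsym: "f (- y) = f y" for y by (simp add: f_def)
  define h where "h x = (f x - f (x - t)) * Dfun x t" for x
  have fint2: "integrable lborel (\<lambda>x. f (x - t))"
    using lborel_integrable_real_affine_iff[of 1 f "- t"] fint by simp
  have i1: "integrable lborel (\<lambda>x. f x * Dfun x t)" by (rule Dfun_int[OF fint fnn])
  have i2: "integrable lborel (\<lambda>x. f (x - t) * Dfun x t)"
    by (rule Dfun_int[OF fint2]) (simp add: fnn)
  have refl: "(\<integral>x. f x * Dfun x t \<partial>lborel) = - (\<integral>x. f (x - t) * Dfun x t \<partial>lborel)"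
  proof -
    have "(\<integral>x. f x * Dfun x t \<partial>lborel) = \<bar>-1\<bar> *\<^sub>R (\<integral>x. f (t + -1 * x) * Dfun (t + -1 * x) t \<partial>lborel)"
      by (rule lborel_integral_real_affine) simp
    also have "\<dots> = (\<integral>x. - (f (x - t) * Dfun x t) \<partial>lborel)"
    proof -
      have "f (t + -1 * x) * Dfun (t + -1 * x) t = - (f (x - t) * Dfun x t)" for x
      proof -
        have "f (t + -1 * x) = f (x - t)" using fsym[of "x - t"] by simp
        moreover have "Dfun (t + -1 * x) t = - Dfun x t"
          by (simp add: Dfun_def power2_eq_square algebra_simps)
        ultimately show ?thesis by simp
      qed
      then show ?thesis by simp
    qed
    also have "\<dots> = - (\<integral>x. f (x - t) * Dfun x t \<partial>lborel)" by simp
    finally show ?thesis .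
  qed
  have hint: "integrable lborel h" unfolding h_def using i1 i2 by (simp add: left_diff_distrib)
  have Ih: "(\<integral>x. h x \<partial>lborel) = 2 * (\<integral>x. f x * Dfun x t \<partial>lborel)"
    unfolding h_def using i1 i2 refl by (simp add: left_diff_distrib)
  have hpos: "h x > 0" if "x \<noteq> t / 2" for x
  proof -
    have pq: "x\<^sup>2 \<noteq> (x - t)\<^sup>2"
    proof
      assume "x\<^sup>2 = (x - t)\<^sup>2"
      then have "t * (2 * x - t) = 0" by (simp add: power2_eq_square algebra_simps)
      with t that show False by auto
    qed
    have pos1: "0 < 1 + x\<^sup>2" "0 < 1 + (x - t)\<^sup>2" by (auto simp: add_pos_nonneg)
    show ?thesis
    proof (cases "x\<^sup>2 < (x - t)\<^sup>2")
      case True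
      have "(1 + (x - t)\<^sup>2) powr (- m) < (1 + x\<^sup>2) powr (- m)"
        by (rule powr_less_mono2_neg) (use m pos1 True in auto)
      then have a: "f x - f (x - t) > 0" using c by (simp add: f_def)
      have "ln (1 + x\<^sup>2) < ln (1 + (x - t)\<^sup>2)" using pos1 True by simp
      then have "Dfun x t > 0" by (simp add: Dfun_def)
      with a show ?thesis by (simp add: h_def)
    next
      case False
      with pq have F: "(x - t)\<^sup>2 < x\<^sup>2" by auto
      have "(1 + x\<^sup>2) powr (- m) < (1 + (x - t)\<^sup>2) powr (- m)"
        by (rule powr_less_mono2_neg) (use m pos1 F in auto)
      then have a: "f x - f (x - t) < 0" using c by (simp add: f_def)
      have "ln (1 + (x - t)\<^sup>2) < ln (1 + x\<^sup>2)" using pos1 F by simp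
      then have "Dfun x t < 0" by (simp add: Dfun_def)
      with a show ?thesis by (simp add: h_def mult_neg_neg)
    qed
  qed
  have hnn: "h x \<ge> 0" for x
    using hpos[of x] by (cases "x = t / 2") (auto simp: h_def Dfun_def)
  have "(\<integral>x. h x \<partial>lborel) \<noteq> 0"
  proof
    assume "(\<integral>x. h x \<partial>lborel) = 0"
    then have "AE x in lborel. h x = 0"
      using integral_nonneg_eq_0_iff_AE[OF hint] hnn by auto
    then have "AE x in lborel. h x = 0 \<and> x \<noteq> t / 2"
      using AE_lborel_singleton[of "t / 2"] by (rule eventually_conj)
    then have "AE (x::real) in lborel. False"
    proof (rule AE_mp)
      show "AE x in lborel. h x = 0 \<and> x \<noteq> t / 2 \<longrightarrow> False"
        using hpos by (intro AE_I2) force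
    qed
    then have "ae_filter (lborel::real measure) = bot" using trivial_limit_def by blast
    then show False by (simp add: ae_filter_eq_bot_iff)
  qed
  moreover have "(\<integral>x. h x \<partial>lborel) \<ge> 0" using hnn by simp
  ultimately show ?thesis using Ih by linarith
qed




lemma poly_big:
  fixes u K :: real
  assumes K: "K \<ge> 0" and u: "u \<ge> 3 * (2 * (1 + K\<^sup>2)\<^sup>2 * (1 + 2 * K\<^sup>2))"
  shows "2 * (1 + (u + K)\<^sup>2) * (1 + K\<^sup>2)\<^sup>2 < (1 + u\<^sup>2)\<^sup>2"
proof -
  define Q where "Q = (1 + K\<^sup>2)\<^sup>2"
  define C where "C = 2 * Q * (1 + 2 * K\<^sup>2)"
  have Q1: "Q \<ge> 1" unfolding Q_def by (simp add: one_le_power)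
  have C2: "C \<ge> 2 * Q" unfolding C_def using Q1 by (simp add: mult_le_cancel_left1)
  have u3: "u \<ge> 3 * C" using u by (simp add: C_def Q_def)
  have u1: "u \<ge> 1" using u3 C2 Q1 by linarith
  have "(u + K)\<^sup>2 \<le> 2 * u\<^sup>2 + 2 * K\<^sup>2"
    using sum_squares_ge_zero[of "u - K" 0] by (simp add: power2_eq_square algebra_simps)
  then have "2 * (1 + (u + K)\<^sup>2) * (1 + K\<^sup>2)\<^sup>2 \<le> 2 * (1 + 2 * u\<^sup>2 + 2 * K\<^sup>2) * Q"
    unfolding Q_def by (intro mult_right_mono) auto
  also have "\<dots> = C + 4 * Q * u\<^sup>2" by (simp add: C_def algebra_simps)
  also have "\<dots> \<le> C + 2 * C * u\<^sup>2" using C2 by (simp add: mult_right_mono)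
  also have "\<dots> < (1 + u\<^sup>2)\<^sup>2"
  proof -
    have "u\<^sup>2 \<ge> 3 * C"
    proof -
      have "u\<^sup>2 \<ge> u" using u1 by (simp add: power2_eq_square)
      then show ?thesis using u3 by linarith
    qed
    then have "u\<^sup>2 * u\<^sup>2 \<ge> (3 * C) * u\<^sup>2" by (rule mult_right_mono) simp
    then have A1: "u\<^sup>2 * u\<^sup>2 \<ge> 3 * (C * u\<^sup>2)" by simp
    moreover have "C * u\<^sup>2 \<ge> C"
    proof -
      have "u\<^sup>2 \<ge> 1" using u1 by (simp add: one_le_power)
      moreover have "C \<ge> 0" using C2 Q1 by linarith
      ultimately show ?thesis using mult_left_mono[of 1 "u\<^sup>2" C] by simp
    qed
    moreover have "(1 + u\<^sup>2)\<^sup>2 = 1 + 2 * u\<^sup>2 + u\<^sup>2 * u\<^sup>2" by (simp add: power2_eq_square algebra_simps)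
    moreover have "2 * C * u\<^sup>2 = 2 * (C * u\<^sup>2)" by simp
    moreover have "u\<^sup>2 \<ge> 0" by simp
    ultimately show ?thesis using A1 by linarith
  qed
  finally show ?thesis .
qed

lemma big_t:
  fixes t K :: real
  assumes K: "K \<ge> 0" and t: "\<bar>t\<bar> \<ge> K + 3 * (2 * (1 + K\<^sup>2)\<^sup>2 * (1 + 2 * K\<^sup>2))"
  shows "ln (2 * (1 + t\<^sup>2)) < 2 * (ln (1 + (\<bar>t\<bar> - K)\<^sup>2) - ln (1 + K\<^sup>2))"
proof -
  define u where "u = \<bar>t\<bar> - K"
  have tu: "t\<^sup>2 = (u + K)\<^sup>2" unfolding u_def by simp
  have p: "0 < 1 + u\<^sup>2" "0 < 1 + K\<^sup>2" "0 < 1 + t\<^sup>2" by (auto simp: add_pos_nonneg)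
  have "2 * (1 + t\<^sup>2) * (1 + K\<^sup>2)\<^sup>2 < (1 + u\<^sup>2)\<^sup>2"
  proof -
    have "u \<ge> 3 * (2 * (1 + K\<^sup>2)\<^sup>2 * (1 + 2 * K\<^sup>2))" using t unfolding u_def by linarith
    then have "2 * (1 + (u + K)\<^sup>2) * (1 + K\<^sup>2)\<^sup>2 < (1 + u\<^sup>2)\<^sup>2" by (rule poly_big[OF K])
    then show ?thesis by (simp only: tu)
  qed
  then have "ln (2 * (1 + t\<^sup>2) * (1 + K\<^sup>2)\<^sup>2) < ln ((1 + u\<^sup>2)\<^sup>2)"
    using p by (subst ln_less_cancel_iff) auto
  moreover have "ln (2 * (1 + t\<^sup>2) * (1 + K\<^sup>2)\<^sup>2) = ln (2 * (1 + t\<^sup>2)) + 2 * ln (1 + K\<^sup>2)"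
    using p by (simp add: ln_mult_pos ln_realpow)
  moreover have "ln ((1 + u\<^sup>2)\<^sup>2) = 2 * ln (1 + u\<^sup>2)"
    using p by (simp add: ln_realpow)
  ultimately show ?thesis unfolding u_def by simp
qed



lemma key:
  fixes X :: "nat \<Rightarrow> 'a \<Rightarrow> real" and f :: "real \<Rightarrow> real"
  assumes P: "prob_space M"
    and ind: "prob_space.indep_vars M (\<lambda>_. borel) X {1..}"
    and dist: "\<And>i. i \<ge> 1 \<Longrightarrow> distr M borel (X i) = distr M borel (X 1)"
    and D1: "distributed M lborel (X 1) (\<lambda>x. ennreal (f x))"
    and f_def: "\<And>x. f x = c * (1 + x\<^sup>2) powr (- m)" and c: "c > 0" and m: "m > 0"
    and fint: "integrable lborel f" and f1: "(\<integral>x. f x \<partial>lborel) = 1"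
    and e: "\<epsilon> > 0"
  shows "AE \<omega> in M. eventually (\<lambda>n. \<forall>t. \<epsilon> \<le> \<bar>t\<bar> \<longrightarrow> (\<Sum>i\<in>{1..n}. Dfun (X i \<omega>) t) > 0) sequentially"
proof -
  interpret prob_space M by (rule P)
  have Xm[measurable]: "X i \<in> borel_measurable M" if "i \<ge> 1" for i
    using ind that unfolding indep_vars_def by auto
  have X1m[measurable]: "X 1 \<in> borel_measurable M" using Xm[of 1] by simp
  have fnn: "0 \<le> f x" for x using c by (simp add: f_def)
  define G where "G t = (\<integral>x. f x * Dfun x t \<partial>lborel)" for t
  have EG: "(\<integral>\<omega>. Dfun (X 1 \<omega>) t \<partial>M) = G t" for t
    unfolding G_def by (rule distributed_integral[OF D1, symmetric]) (auto simp: fnn)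
  define B where "B k = {\<omega> \<in> space M. \<bar>X 1 \<omega>\<bar> \<le> real k}" for k :: nat
  have Bm: "range B \<subseteq> sets M"
  proof -
    have "B k \<in> sets M" for k unfolding B_def by measurable
    then show ?thesis by auto
  qed
  have Binc: "incseq B" unfolding B_def incseq_def by auto
  have BU: "(\<Union>k. B k) = space M"
  proof -
    have "\<exists>k. \<bar>X 1 \<omega>\<bar> \<le> real k" for \<omega> using real_arch_simple by blast
    then show ?thesis unfolding B_def by auto
  qed
  have "(\<lambda>k. prob (B k)) \<longlonglongrightarrow> prob (space M)"
    using finite_Lim_measure_incseq[OF Bm Binc] BU by simp
  then have "(\<lambda>k. prob (B k)) \<longlonglongrightarrow> 1" by (simp add: prob_space)
  then have "eventually (\<lambda>k. prob (B k) > 3/4) sequentially"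
    by (rule order_tendstoD) simp
  then obtain k0 where k0: "prob (B k0) > 3/4" by (auto simp: eventually_sequentially)
  define K where "K = real k0"
  have K0: "K \<ge> 0" unfolding K_def by simp
  define ind where "ind x = (if \<bar>x\<bar> \<le> K then 1 else 0 :: real)" for x
  have ind_m[measurable]: "ind \<in> borel_measurable borel" unfolding ind_def by measurable
  have Eind: "(\<integral>\<omega>. ind (X 1 \<omega>) \<partial>M) = prob (B k0)"
  proof -
    have "(\<integral>\<omega>. ind (X 1 \<omega>) \<partial>M) = (\<integral>\<omega>. indicator (B k0) \<omega> \<partial>M)"
      by (rule Bochner_Integration.integral_cong) (auto simp: ind_def B_def K_def indicator_def)
    also have "\<dots> = prob (B k0 \<inter> space M)" by simp
    also have "B k0 \<inter> space M = B k0" unfolding B_def by auto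
    finally show ?thesis .
  qed
  have AE1: "AE \<omega> in M. eventually (\<lambda>n. \<bar>(\<Sum>i\<in>{1..n}. ind (X i \<omega>)) / real n - (\<integral>\<omega>. ind (X 1 \<omega>) \<partial>M)\<bar> < 1/12) sequentially"
    by (rule slln_bdd[OF P ind dist ind_m, where a=0 and b=1]) (auto simp: ind_def)
  define Cc where "Cc = 2 * (1 + K\<^sup>2)\<^sup>2 * (1 + 2 * K\<^sup>2)"
  have Cc0: "Cc \<ge> 0" unfolding Cc_def by simp
  define T0 where "T0 = K + 3 * Cc"
  define T where "T = T0 + \<epsilon>"
  define S where "S = {-T..-\<epsilon>} \<union> {\<epsilon>..T}"
  have Scomp: "compact S" unfolding S_def by (intro compact_Un compact_Icc)
  have S_abs: "t \<in> S \<longleftrightarrow> \<epsilon> \<le> \<bar>t\<bar> \<and> \<bar>t\<bar> \<le> T" for t using e unfolding S_def by (auto simp: abs_if)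
  have Sne: "S \<noteq> {}"
  proof -
    have "T \<in> S" unfolding S_abs T_def T0_def using K0 Cc0 e by auto
    then show ?thesis by auto
  qed
  have Glip: "\<bar>G t - G s\<bar> \<le> \<bar>t - s\<bar>" for t s
    unfolding G_def by (rule G_lip[OF fint fnn f1])
  have Gcont: "continuous_on S G"
    unfolding continuous_on_iff
  proof (intro ballI allI impI)
    fix x and r :: real assume "x \<in> S" "0 < r"
    show "\<exists>d>0. \<forall>x'\<in>S. dist x' x < d \<longrightarrow> dist (G x') (G x) < r"
    proof (intro exI[of _ r] conjI ballI impI)
      fix x' assume "x' \<in> S" "dist x' x < r"
      then show "dist (G x') (G x) < r" using Glip[of x' x] by (simp add: dist_real_def)
    qed (use \<open>0 < r\<close> in auto)
  qed
  obtain t0 where t0: "t0 \<in> S" "\<forall>y\<in>S. G t0 \<le> G y"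
    using continuous_attains_inf[OF Scomp Sne Gcont] by blast
  define c0 where "c0 = G t0"
  have c0: "c0 > 0"
  proof -
    have "t0 \<noteq> 0" using t0(1) e unfolding S_abs by auto
    then show ?thesis unfolding c0_def G_def by (rule G_pos[OF f_def c m fint])
  qed
  have cover: "S \<subseteq> (\<Union>s\<in>S. ball s (c0/4))" using c0 by force
  have opn: "\<And>s. s \<in> S \<Longrightarrow> open (ball s (c0/4))" by simp
  obtain F where F: "F \<subseteq> S" "finite F" "S \<subseteq> (\<Union>s\<in>F. ball s (c0/4))"
    using compactE_image[OF Scomp opn cover] by metis
  have AE2: "AE \<omega> in M. \<forall>s\<in>F. eventually (\<lambda>n. \<bar>(\<Sum>i\<in>{1..n}. Dfun (X i \<omega>) s) / real n - G s\<bar> < c0/4) sequentially"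
  proof (rule AE_finite_allI[OF F(2)])
    fix s assume "s \<in> F"
    have "AE \<omega> in M. eventually (\<lambda>n. \<bar>(\<Sum>i\<in>{1..n}. Dfun (X i \<omega>) s) / real n - (\<integral>\<omega>. Dfun (X 1 \<omega>) s \<partial>M)\<bar> < c0/4) sequentially"
    proof (rule slln_bdd[OF P ind dist Dfun_meas, where a="- \<bar>s\<bar> - 1" and b="\<bar>s\<bar> + 1"])
      fix x
      show "- \<bar>s\<bar> - 1 \<le> Dfun x s" "Dfun x s \<le> \<bar>s\<bar> + 1" using Dfun_bound[of x s] by auto
    qed (use c0 in auto)
    then show "AE \<omega> in M. eventually (\<lambda>n. \<bar>(\<Sum>i\<in>{1..n}. Dfun (X i \<omega>) s) / real n - G s\<bar> < c0/4) sequentially"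
      unfolding EG .
  qed
  show ?thesis
  proof (rule AE_mp[OF eventually_conj[OF AE1 AE2]], intro AE_I2 impI)
    fix \<omega> assume "\<omega> \<in> space M" and H: "eventually (\<lambda>n. \<bar>(\<Sum>i\<in>{1..n}. ind (X i \<omega>)) / real n - (\<integral>\<omega>. ind (X 1 \<omega>) \<partial>M)\<bar> < 1/12) sequentially
      \<and> (\<forall>s\<in>F. eventually (\<lambda>n. \<bar>(\<Sum>i\<in>{1..n}. Dfun (X i \<omega>) s) / real n - G s\<bar> < c0/4) sequentially)"
    have ev2: "eventually (\<lambda>n. \<forall>s\<in>F. \<bar>(\<Sum>i\<in>{1..n}. Dfun (X i \<omega>) s) / real n - G s\<bar> < c0/4) sequentially"
      using H by (intro eventually_ball_finite F(2)) auto
    have ev3: "eventually (\<lambda>n. n \<ge> (1::nat)) sequentially" by (rule eventually_ge_at_top)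
    show "eventually (\<lambda>n. \<forall>t. \<epsilon> \<le> \<bar>t\<bar> \<longrightarrow> (\<Sum>i\<in>{1..n}. Dfun (X i \<omega>) t) > 0) sequentially"
      using eventually_conj[OF eventually_conj[OF conjunct1[OF H] ev2] ev3]
    proof (rule eventually_mono, safe)
      fix n t
      assume h1: "\<bar>(\<Sum>i\<in>{1..n}. ind (X i \<omega>)) / real n - (\<integral>\<omega>. ind (X 1 \<omega>) \<partial>M)\<bar> < 1/12"
        and h2: "\<forall>s\<in>F. \<bar>(\<Sum>i\<in>{1..n}. Dfun (X i \<omega>) s) / real n - G s\<bar> < c0/4"
        and n1: "1 \<le> n" and te: "\<epsilon> \<le> \<bar>t\<bar>"
      have npos: "real n > 0" using n1 by simp
      show "(\<Sum>i\<in>{1..n}. Dfun (X i \<omega>) t) > 0"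
      proof (cases "\<bar>t\<bar> \<ge> T0")
        case True
        define a where "a = ln (1 + (\<bar>t\<bar> - K)\<^sup>2) - ln (1 + K\<^sup>2)"
        define b where "b = ln (2 * (1 + t\<^sup>2))"
        define N1 where "N1 = (\<Sum>i\<in>{1..n}. ind (X i \<omega>))"
        have b0: "b \<ge> 0" unfolding b_def by (simp add: add_pos_nonneg)
        have ba: "b < 2 * a" unfolding a_def b_def
          by (rule big_t[OF K0]) (use True in \<open>simp add: T0_def Cc_def\<close>)
        have pw: "Dfun x t \<ge> ind x * a - (1 - ind x) * b" for x
        proof (cases "\<bar>x\<bar> \<le> K")
          case True
          have "K \<le> \<bar>t\<bar>" using \<open>\<bar>t\<bar> \<ge> T0\<close> Cc0 unfolding T0_def by linarith
          then show ?thesis using D_lower_K[OF True] True by (simp add: ind_def a_def Dfun_def)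
        next
          case False
          then show ?thesis using D_lower[where x=x and t=t] by (simp add: ind_def b_def Dfun_def)
        qed
        have "(\<Sum>i\<in>{1..n}. Dfun (X i \<omega>) t) \<ge> (\<Sum>i\<in>{1..n}. ind (X i \<omega>) * a - (1 - ind (X i \<omega>)) * b)"
          by (rule sum_mono) (rule pw)
        also have "(\<Sum>i\<in>{1..n}. ind (X i \<omega>) * a - (1 - ind (X i \<omega>)) * b) = N1 * a - (real n - N1) * b"
          by (simp add: N1_def sum_subtractf sum_distrib_right left_diff_distrib)
        finally have sum_ge: "(\<Sum>i\<in>{1..n}. Dfun (X i \<omega>) t) \<ge> N1 * a - (real n - N1) * b" .
        have "N1 / real n > 2/3" using h1 k0 Eind unfolding N1_def by linarith
        then have N1n: "N1 > 2/3 * real n" using npos by (simp add: field_simps)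
        have N1pos: "N1 > 0" using N1n npos by linarith
        have "(real n - N1) * b \<le> (N1 / 2) * b" using N1n b0 by (intro mult_right_mono) auto
        also have "(N1 / 2) * b < (N1 / 2) * (2 * a)" using ba N1pos by (intro mult_strict_left_mono) auto
        also have "\<dots> = N1 * a" by simp
        finally show ?thesis using sum_ge by linarith
      next
        case False
        then have "t \<in> S" unfolding S_abs T_def using te e by auto
        then obtain s where s: "s \<in> F" "t \<in> ball s (c0/4)" using F(3) by blast
        have Gs: "G s \<ge> c0" using t0(2) F(1) s(1) unfolding c0_def by auto
        have "(\<Sum>i\<in>{1..n}. Dfun (X i \<omega>) s) / real n > G s - c0/4"
        proof -
          have "\<bar>(\<Sum>i\<in>{1..n}. Dfun (X i \<omega>) s) / real n - G s\<bar> < c0/4" using h2 s(1) by blast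
          then show ?thesis by linarith
        qed
        then have q1: "(G s - c0/4) * real n < (\<Sum>i\<in>{1..n}. Dfun (X i \<omega>) s)"
          using pos_less_divide_eq[OF npos] by blast
        have q2: "(3 * c0 / 4) * real n \<le> (G s - c0/4) * real n"
          using Gs npos by (intro mult_right_mono) auto
        have sumS: "(\<Sum>i\<in>{1..n}. Dfun (X i \<omega>) s) > real n * (3 * c0 / 4)"
          using q1 q2 by (simp add: mult.commute)
        have dts: "\<bar>t - s\<bar> < c0/4" using s(2) by (simp add: dist_real_def abs_minus_commute)
        have "(\<Sum>i\<in>{1..n}. Dfun (X i \<omega>) s - Dfun (X i \<omega>) t) \<le> (\<Sum>i\<in>{1..n}. \<bar>t - s\<bar>)"
          by (rule sum_mono) (use Dfun_diff in \<open>auto simp: abs_le_iff abs_minus_commute\<close>)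
        also have "\<dots> = real n * \<bar>t - s\<bar>" by simp
        also have "\<dots> \<le> real n * (c0/4)" using dts npos by (intro mult_left_mono) auto
        finally have "(\<Sum>i\<in>{1..n}. Dfun (X i \<omega>) s) - (\<Sum>i\<in>{1..n}. Dfun (X i \<omega>) t) \<le> real n * (c0/4)"
          by (simp add: sum_subtractf)
        moreover have "real n * (3 * c0 / 4) - real n * (c0/4) > 0" using npos c0 by (simp add: field_simps)
        ultimately show ?thesis using sumS by linarith
      qed
    qed
  qed
qed



theorem proposition2p7:
  fixes M :: "'a measure" and X :: "nat \<Rightarrow> 'a \<Rightarrow> real" and m :: real
  assumes "prob_space M"
    and "m > 1/2"
    and "prob_space.indep_vars M (\<lambda>_. borel) X {1..}"
    and "\<And>i. i \<ge> 1 \<Longrightarrow> distributed M lborel (X i) (\<lambda>x. ennreal (pvii_density m x))"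
  shows "AE \<omega> in M. \<forall>\<epsilon>>0. \<exists>N::nat. \<forall>n>N. minimizer_set X n \<omega> \<subseteq> {-\<epsilon>..\<epsilon>}"
proof -
  interpret prob_space M by (rule assms(1))
  define f where "f = pvii_density m"
  define c where "c = pvii_const m"
  have Xd: "distributed M lborel (X i) (\<lambda>x. ennreal (f x))" if "i \<ge> 1" for i
    using assms(4)[OF that] unfolding f_def .
  have D1: "distributed M lborel (X 1) (\<lambda>x. ennreal (f x))" by (rule Xd) simp
  have Xm[measurable]: "X i \<in> borel_measurable M" if "i \<ge> 1" for i
    using assms(3) that unfolding indep_vars_def by auto
  have dist: "distr M borel (X i) = distr M borel (X 1)" if "i \<ge> 1" for i
  proof -
    have "distr M borel (X i) = distr M lborel (X i)" by (rule distr_cong) auto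
    also have "\<dots> = density lborel (\<lambda>x. ennreal (f x))"
      by (rule distributed_distr_eq_density[OF Xd[OF that]])
    also have "\<dots> = distr M lborel (X 1)"
      by (rule distributed_distr_eq_density[OF D1, symmetric])
    also have "\<dots> = distr M borel (X 1)" by (rule distr_cong) auto
    finally show ?thesis .
  qed
  have fform: "f x = c * (1 + x\<^sup>2) powr (- m)" for x
    by (simp add: f_def pvii_density_def c_def)
  have cnn: "c \<ge> 0" unfolding c_def pvii_const_def by simp
  have "emeasure (density lborel (\<lambda>x. ennreal (f x))) UNIV = 1"
  proof -
    have "emeasure (density lborel (\<lambda>x. ennreal (f x))) UNIV = emeasure (distr M lborel (X 1)) UNIV"
      unfolding distributed_distr_eq_density[OF D1] ..
    also have "\<dots> = emeasure M (X 1 -` UNIV \<inter> space M)"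
      by (rule emeasure_distr) auto
    also have "\<dots> = 1" by (simp add: emeasure_space_1)
    finally show ?thesis .
  qed
  then have cpos: "c > 0"
  proof (rule contrapos_pp)
    assume "\<not> c > 0"
    then have "c = 0" using cnn by simp
    then have "(\<lambda>x. ennreal (f x)) = (\<lambda>x. 0)" by (simp add: fform)
    then show "emeasure (density lborel (\<lambda>x. ennreal (f x))) UNIV \<noteq> 1"
      by (simp add: emeasure_density)
  qed
  have mpos: "m > 0" using assms(2) by simp
  have fnn: "0 \<le> f x" for x using cpos by (simp add: fform)
  have fint: "integrable lborel f"
    using distributed_integrable[OF D1, of "\<lambda>_. 1"] fnn by simp
  have f1: "(\<integral>x. f x \<partial>lborel) = 1"
    using distributed_integral[OF D1, of "\<lambda>_. 1"] fnn by (simp add: prob_space)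
  have Kk: "AE \<omega> in M. eventually (\<lambda>n. \<forall>t. inverse (real (Suc k)) \<le> \<bar>t\<bar> \<longrightarrow> (\<Sum>i\<in>{1..n}. Dfun (X i \<omega>) t) > 0) sequentially" for k
    by (rule key[OF assms(1) assms(3) dist D1 fform cpos mpos fint f1]) simp_all
  then have "AE \<omega> in M. \<forall>k. eventually (\<lambda>n. \<forall>t. inverse (real (Suc k)) \<le> \<bar>t\<bar> \<longrightarrow> (\<Sum>i\<in>{1..n}. Dfun (X i \<omega>) t) > 0) sequentially"
    by (subst AE_all_countable) blast
  then show ?thesis
  proof (rule AE_mp, intro AE_I2 impI allI)
    fix \<omega> and \<epsilon> :: real
    assume H: "\<forall>k. eventually (\<lambda>n. \<forall>t. inverse (real (Suc k)) \<le> \<bar>t\<bar> \<longrightarrow> (\<Sum>i\<in>{1..n}. Dfun (X i \<omega>) t) > 0) sequentially"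
      and "\<epsilon> > 0"
    obtain k where k: "inverse (real (Suc k)) < \<epsilon>" using reals_Archimedean[OF \<open>\<epsilon> > 0\<close>] by blast
    obtain N where N: "\<And>n. n \<ge> N \<Longrightarrow> \<forall>t. inverse (real (Suc k)) \<le> \<bar>t\<bar> \<longrightarrow> (\<Sum>i\<in>{1..n}. Dfun (X i \<omega>) t) > 0"
      using H[rule_format, of k] unfolding eventually_sequentially by blast
    show "\<exists>N::nat. \<forall>n>N. minimizer_set X n \<omega> \<subseteq> {-\<epsilon>..\<epsilon>}"
    proof (intro exI[of _ N] allI impI subsetI)
      fix n t assume "N < n" and tm: "t \<in> minimizer_set X n \<omega>"
      have npos: "real n > 0" using \<open>N < n\<close> by simp
      show "t \<in> {-\<epsilon>..\<epsilon>}"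
      proof (rule ccontr)
        assume "t \<notin> {-\<epsilon>..\<epsilon>}"
        then have "\<epsilon> < \<bar>t\<bar>" by auto
        then have "inverse (real (Suc k)) \<le> \<bar>t\<bar>" using k by simp
        then have pos: "(\<Sum>i\<in>{1..n}. Dfun (X i \<omega>) t) > 0" using N[of n] \<open>N < n\<close> by simp
        have "Ln X n t \<omega> - Ln X n 0 \<omega> = (\<Sum>i\<in>{1..n}. Dfun (X i \<omega>) t) / real n"
          unfolding Ln_def Dfun_def by (simp add: sum_subtractf diff_divide_distrib)
        also have "\<dots> > 0" using pos npos by simp
        finally have "Ln X n 0 \<omega> < Ln X n t \<omega>" by simp
        moreover have "Ln X n t \<omega> \<le> Ln X n 0 \<omega>" using tm unfolding minimizer_set_def by blast
        ultimately show False by simp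
      qed
    qed
  qed
qed

end
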